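(* Let $w\in[0,\infty)^n$, $c\in(0,\infty)^n$, and let $(A_1,\dots,A_k)$ be any Sidney decomposition of $\mathcal G$ (with respect to $w,c$). Then there exist $i\in\{1,\dots,k\}$ and a search whose support is $A_1\cup\dots\cup A_i$ that minimizes $J^+(\cdot\,;w,c)$ over $\mathcal S$.
   Context: $\mathcal G=([n],\mathcal E)$ is a finite directed acyclic graph on $[n]=\{1,\dots,n\}$. A search is a tuple $s=(s_1,\dots,s_k)$ of distinct vertices ($0\le k\le n$) such that every in-neighbor of each $s_i$ belongs to $\{s_1,\dots,s_{i-1}\}$; $\mathcal S$ denotes the set of searches. The support of a search is its underlying (unordered) set; an initial set is the support of a search. For $A\subseteq[n]$, $\mathcal G|_A$ is the induced sub-DAG on $A$. For $w\in[0,\infty)^n$, $c\in(0,\infty)^n$: $J(s;w,c)=\big(\sum_{i=1}^{|s|}c_{s_i}(1-\sum_{j<i}w_{s_j})\big)/\big(\sum_{i=1}^{|s|}w_{s_i}\big)$ if the denominator is positive and $+\infty$ otherwise (in particular for the empty search); $J^+=\max\{0,J\}$ with $\max\{0,+\infty\}=+\infty$. The density of a nonempty $A\subseteq[n]$ is $\rho(A)=\sum_{i\in A}w_i/\sum_{i\in A}c_i$, and $\rho(\emptyset)=0$. A Sidney decomposition is an ordered partition $(A_1,\dots,A_k)$ of $[n]$ into nonempty sets such that, for each $i$, $A_i$ is an initial set of $\mathcal G|_{A_i\cup\dots\cup A_k}$ of maximum density among all initial sets of $\mathcal G|_{A_i\cup\dots\cup A_k}$. *)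

theory Defs
  imports Complex_Main "HOL-Library.Extended_Real"
begin

text \<open>A DAG on [n] = {1..n} is given by an edge relation E; (u,v) \<in> E means u is an in-neighbour of v.\<close>

definition is_dag :: "nat \<Rightarrow> (nat \<times> nat) set \<Rightarrow> bool" where
  "is_dag n E \<longleftrightarrow> E \<subseteq> {1..n} \<times> {1..n} \<and> acyclic E"

definition is_search_in :: "(nat \<times> nat) set \<Rightarrow> nat set \<Rightarrow> nat list \<Rightarrow> bool" where
  "is_search_in E B s \<longleftrightarrow> distinct s \<and> set s \<subseteq> B \<and>
     (\<forall>i < length s. \<forall>u \<in> B. (u, s ! i) \<in> E \<longrightarrow> u \<in> set (take i s))"

definition is_search :: "nat \<Rightarrow> (nat \<times> nat) set \<Rightarrow> nat list \<Rightarrow> bool" where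
  "is_search n E s \<longleftrightarrow> is_search_in E {1..n} s"

definition initial_set_in :: "(nat \<times> nat) set \<Rightarrow> nat set \<Rightarrow> nat set \<Rightarrow> bool" where
  "initial_set_in E B A \<longleftrightarrow> (\<exists>s. is_search_in E B s \<and> set s = A)"

definition Jcost :: "(nat \<Rightarrow> real) \<Rightarrow> (nat \<Rightarrow> real) \<Rightarrow> nat list \<Rightarrow> ereal" where
  "Jcost w c s =
     (let den = (\<Sum>i<length s. w (s ! i));
          num = (\<Sum>i<length s. c (s ! i) * (1 - (\<Sum>j<i. w (s ! j))))
      in if den > 0 then ereal (num / den) else \<infinity>)"

definition Jplus :: "(nat \<Rightarrow> real) \<Rightarrow> (nat \<Rightarrow> real) \<Rightarrow> nat list \<Rightarrow> ereal" where
  "Jplus w c s = max 0 (Jcost w c s)"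

definition density :: "(nat \<Rightarrow> real) \<Rightarrow> (nat \<Rightarrow> real) \<Rightarrow> nat set \<Rightarrow> real" where
  "density w c A = (if A = {} then 0 else sum w A / sum c A)"

text \<open>Sidney decomposition (A_1,...,A_k) = As ! 0, ..., As ! (k-1).\<close>
definition sidney_decomposition ::
  "nat \<Rightarrow> (nat \<times> nat) set \<Rightarrow> (nat \<Rightarrow> real) \<Rightarrow> (nat \<Rightarrow> real) \<Rightarrow> nat set list \<Rightarrow> bool" where
  "sidney_decomposition n E w c As \<longleftrightarrow>
     (\<forall>i < length As. As ! i \<noteq> {}) \<and>
     (\<forall>i j. i < j \<and> j < length As \<longrightarrow> As ! i \<inter> As ! j = {}) \<and>
     \<Union> (set As) = {1..n} \<and>
     (\<forall>i < length As.
        let B = \<Union> (set (drop i As)) in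
        initial_set_in E B (As ! i) \<and>
        (\<forall>A'. initial_set_in E B A' \<longrightarrow> density w c A' \<le> density w c (As ! i)))"

end

theory Submission
  imports Defs
begin


lemma search_char:
  "is_search_in E V s \<longleftrightarrow> distinct s \<and> set s \<subseteq> V \<and>
     (\<forall>xs x ys. s = xs @ x # ys \<longrightarrow> (\<forall>u\<in>V. (u,x)\<in>E \<longrightarrow> u \<in> set xs))"
proof
  assume H: "is_search_in E V s"
  show "distinct s \<and> set s \<subseteq> V \<and>
     (\<forall>xs x ys. s = xs @ x # ys \<longrightarrow> (\<forall>u\<in>V. (u,x)\<in>E \<longrightarrow> u \<in> set xs))"
  proof (intro conjI allI impI ballI)
    fix xs x ys u assume s: "s = xs @ x # ys" and u: "u \<in> V" "(u,x) \<in> E"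
    have "length xs < length s" "s ! length xs = x" "take (length xs) s = xs" using s by auto
    then show "u \<in> set xs" using H u unfolding is_search_in_def by metis
  qed (use H in \<open>auto simp: is_search_in_def\<close>)
next
  assume H: "distinct s \<and> set s \<subseteq> V \<and>
     (\<forall>xs x ys. s = xs @ x # ys \<longrightarrow> (\<forall>u\<in>V. (u,x)\<in>E \<longrightarrow> u \<in> set xs))"
  show "is_search_in E V s" unfolding is_search_in_def
  proof (intro conjI allI impI ballI)
    fix i u assume i: "i < length s" and u: "u \<in> V" "(u, s!i) \<in> E"
    from id_take_nth_drop[OF i] H u show "u \<in> set (take i s)" by blast
  qed (use H in auto)
qed

lemma search_nil: "is_search_in E V []"
  by (simp add: is_search_in_def)

lemma search_prefix: "is_search_in E V (p @ q) \<Longrightarrow> is_search_in E V p"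
  unfolding search_char
proof (intro conjI allI impI ballI)
  fix xs x ys u
  assume H: "distinct (p @ q) \<and> set (p @ q) \<subseteq> V \<and>
       (\<forall>xs x ys. p @ q = xs @ x # ys \<longrightarrow> (\<forall>u\<in>V. (u, x) \<in> E \<longrightarrow> u \<in> set xs))"
    and p: "p = xs @ x # ys" and u: "u \<in> V" "(u,x) \<in> E"
  have "p @ q = xs @ x # (ys @ q)" using p by simp
  then show "u \<in> set xs" using H u by blast
qed auto

lemma filter_split:
  "filter P s = xs @ x # ys \<Longrightarrow> \<exists>as vs. s = as @ x # vs \<and> filter P as = xs"
proof (induction s arbitrary: xs)
  case Nil then show ?case by simp
next
  case (Cons a s)
  show ?case
  proof (cases "P a")
    case True
    show ?thesis
    proof (cases xs)
      case Nil
      then show ?thesis using Cons.prems True by (intro exI[of _ "[]"] exI[of _ s]) auto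
    next
      case (Cons b xs')
      then have "filter P s = xs' @ x # ys" "b = a" using Cons.prems True by auto
      then obtain as vs where "s = as @ x # vs" "filter P as = xs'" using Cons.IH by blast
      then show ?thesis using True \<open>b = a\<close> Cons by (intro exI[of _ "a # as"] exI[of _ vs]) auto
    qed
  next
    case False
    then have "filter P s = xs @ x # ys" using Cons.prems by simp
    then obtain as vs where "s = as @ x # vs" "filter P as = xs" using Cons.IH by blast
    then show ?thesis using False by (intro exI[of _ "a # as"] exI[of _ vs]) auto
  qed
qed

lemma search_filter:
  assumes "is_search_in E V s"
  shows "is_search_in E {x\<in>V. P x} (filter P s)"
  unfolding search_char
proof (intro conjI allI impI ballI)
  fix xs x ys u
  assume f: "filter P s = xs @ x # ys" and u: "u \<in> {x\<in>V. P x}" "(u,x) \<in> E"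
  obtain as vs where ab: "s = as @ x # vs" "filter P as = xs"
    using filter_split[OF f] by blast
  then have "u \<in> set as" using assms u unfolding search_char by blast
  then show "u \<in> set xs" using ab u by auto
qed (use assms in \<open>auto simp: search_char\<close>)

lemma search_restrict: "is_search_in E V s \<Longrightarrow> V' \<subseteq> V \<Longrightarrow> set s \<subseteq> V' \<Longrightarrow> is_search_in E V' s"
  unfolding is_search_in_def by blast

lemma search_lift: "is_search_in E A s \<Longrightarrow> A \<subseteq> V \<Longrightarrow> (\<forall>v\<in>A. \<forall>u\<in>V. (u,v)\<in>E \<longrightarrow> u\<in>A)
   \<Longrightarrow> is_search_in E V s"
  unfolding is_search_in_def by (meson nth_mem subset_iff)

lemma search_downclosed: "is_search_in E V a \<Longrightarrow> v \<in> set a \<Longrightarrow> u \<in> V \<Longrightarrow> (u,v) \<in> E \<Longrightarrow> u \<in> set a"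
  unfolding search_char by (metis Un_iff set_append split_list)

lemma search_append:
  assumes a: "is_search_in E V a" and t: "is_search_in E (V - set a) t"
  shows "is_search_in E V (a @ t)"
  unfolding is_search_in_def
proof (intro conjI allI impI ballI)
  show "distinct (a @ t)" using a t by (auto simp: is_search_in_def)
  show "set (a @ t) \<subseteq> V" using a t by (auto simp: is_search_in_def)
  fix i u assume i: "i < length (a @ t)" and u: "u \<in> V" "(u, (a @ t) ! i) \<in> E"
  show "u \<in> set (take i (a @ t))"
  proof (cases "i < length a")
    case True
    then show ?thesis using a u by (auto simp: is_search_in_def nth_append)
  next
    case False
    then have e: "(a @ t) ! i = t ! (i - length a)" "take i (a @ t) = a @ take (i - length a) t"
      by (auto simp: nth_append)
    show ?thesis
    proof (cases "u \<in> set a")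
      case True then show ?thesis using e by simp
    next
      case False
      then have "u \<in> V - set a" using u by simp
      then show ?thesis using t e u i \<open>\<not> i < length a\<close> unfolding is_search_in_def by auto
    qed
  qed
qed

lemma search_complete:
  assumes p: "is_search_in E V p" and a: "is_search_in E V a"
  shows "is_search_in E V (p @ filter (\<lambda>x. x \<notin> set p) a)"
proof -
  have "is_search_in E {x\<in>V. x \<notin> set p} (filter (\<lambda>x. x \<notin> set p) a)"
    by (rule search_filter[OF a])
  moreover have "{x\<in>V. x \<notin> set p} = V - set p" by auto
  ultimately show ?thesis using search_append[OF p] by simp
qed



definition Ls :: "(nat \<Rightarrow> real) \<Rightarrow> nat list \<Rightarrow> real" where
  "Ls f xs = sum_list (map f xs)"

fun inner :: "(nat \<Rightarrow> real) \<Rightarrow> (nat \<Rightarrow> real) \<Rightarrow> nat list \<Rightarrow> real" where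
  "inner w c [] = 0"
| "inner w c (x # xs) = w x * Ls c xs + inner w c xs"

definition Gf :: "(nat \<Rightarrow> real) \<Rightarrow> (nat \<Rightarrow> real) \<Rightarrow> real \<Rightarrow> real \<Rightarrow> nat list \<Rightarrow> real" where
  "Gf w c lam al s = al * Ls c s - lam * Ls w s - inner w c s"

lemma Ls_simps[simp]: "Ls f [] = 0" "Ls f (x # xs) = f x + Ls f xs" "Ls f (xs @ ys) = Ls f xs + Ls f ys"
  by (auto simp: Ls_def)

lemma Ls_set: "distinct xs \<Longrightarrow> Ls f xs = sum f (set xs)"
  by (simp add: Ls_def sum_list_distinct_conv_sum_set)

lemma Ls_partition: "Ls f (filter P s) + Ls f (filter (\<lambda>x. \<not> P x) s) = Ls f s"
  by (induction s) auto

lemma Ls_nonneg: "\<forall>v\<in>set xs. f v \<ge> 0 \<Longrightarrow> Ls f xs \<ge> 0"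
  by (induction xs) auto

lemma inner_append: "inner w c (xs @ ys) = inner w c xs + Ls w xs * Ls c ys + inner w c ys"
  by (induction xs) (auto simp: algebra_simps)

lemma inner_nonneg: "\<forall>v\<in>set xs. w v \<ge> 0 \<and> c v \<ge> 0 \<Longrightarrow> inner w c xs \<ge> 0"
  by (induction xs) (auto simp: Ls_nonneg)

lemma inner_le: "\<forall>v\<in>set xs. w v \<ge> 0 \<and> c v \<ge> 0 \<Longrightarrow> inner w c xs \<le> Ls w xs * Ls c xs"
proof (induction xs)
  case Nil then show ?case by simp
next
  case (Cons x xs)
  have h: "Ls w xs \<ge> 0" "Ls c xs \<ge> 0" "w x \<ge> 0" "c x \<ge> 0" using Cons.prems by (auto intro!: Ls_nonneg)
  have "inner w c (x # xs) \<le> w x * Ls c xs + Ls w xs * Ls c xs" using Cons by simp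
  also have "\<dots> \<le> (w x + Ls w xs) * (c x + Ls c xs)" using h by (simp add: algebra_simps)
  finally show ?case by simp
qed

lemma Gf_append: "Gf w c lam al (xs @ ys) = Gf w c lam al xs + Gf w c lam (al - Ls w xs) ys"
  by (simp add: Gf_def inner_append algebra_simps)

lemma Gf_nil[simp]: "Gf w c lam al [] = 0" by (simp add: Gf_def)

fun Efn :: "(nat \<Rightarrow> real) \<Rightarrow> (nat \<Rightarrow> real) \<Rightarrow> (nat \<Rightarrow> bool) \<Rightarrow> nat list \<Rightarrow> real" where
  "Efn w c P [] = 0"
| "Efn w c P (x # xs) = (if P x then 0 else c x * Ls w (filter P xs) - w x * Ls c (filter P xs)) + Efn w c P xs"

lemma inner_partition:
  "inner w c (filter P s @ filter (\<lambda>x. \<not> P x) s) = inner w c s + Efn w c P s"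
proof (induction s)
  case Nil then show ?case by simp
next
  case (Cons x s)
  have p: "Ls c (filter P s) + Ls c (filter (\<lambda>x. \<not> P x) s) = Ls c s"
    by (rule Ls_partition)
  show ?case
  proof (cases "P x")
    case True
    then show ?thesis using Cons p by (simp add: inner_append)
  next
    case False
    have l: "filter P (x # s) @ filter (\<lambda>x. \<not> P x) (x # s) = filter P s @ x # filter (\<lambda>x. \<not> P x) s"
      using False by simp
    have "inner w c (filter P s @ x # filter (\<lambda>x. \<not> P x) s)
       = inner w c (filter P s) + Ls w (filter P s) * (c x + Ls c (filter (\<lambda>x. \<not> P x) s))
         + w x * Ls c (filter (\<lambda>x. \<not> P x) s) + inner w c (filter (\<lambda>x. \<not> P x) s)"
      by (simp add: inner_append)
    moreover have "inner w c (x # s) + Efn w c P (x # s) = w x * Ls c s + inner w c s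
        + (c x * Ls w (filter P s) - w x * Ls c (filter P s)) + Efn w c P s"
      using False by simp
    moreover have "inner w c s + Efn w c P s = inner w c (filter P s) + Ls w (filter P s) * Ls c (filter (\<lambda>x. \<not> P x) s) + inner w c (filter (\<lambda>x. \<not> P x) s)"
      using Cons.IH by (simp add: inner_append)
    ultimately show ?thesis unfolding l using p[symmetric] by (simp add: algebra_simps)
  qed
qed

lemma Efn_nonneg:
  assumes "\<forall>k. K + rho * Ls c (filter (\<lambda>x. \<not> P x) (take k s)) - Ls w (filter (\<lambda>x. \<not> P x) (take k s)) \<ge> 0"
    and "\<forall>k. Ls w (filter P (drop k s)) - rho * Ls c (filter P (drop k s)) \<ge> 0"
    and "\<forall>v\<in>set s. c v \<ge> 0"
  shows "Efn w c P s + K * Ls c (filter P s) \<ge> 0"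
  using assms
proof (induction s arbitrary: K)
  case Nil then show ?case by simp
next
  case (Cons x s)
  have K0: "K \<ge> 0" using Cons.prems(1)[rule_format, of 0] by simp
  show ?case
  proof (cases "P x")
    case True
    have pre: "\<forall>k. K + rho * Ls c (filter (\<lambda>x. \<not> P x) (take k s)) - Ls w (filter (\<lambda>x. \<not> P x) (take k s)) \<ge> 0"
    proof
      fix k show "K + rho * Ls c (filter (\<lambda>x. \<not> P x) (take k s)) - Ls w (filter (\<lambda>x. \<not> P x) (take k s)) \<ge> 0"
        using Cons.prems(1)[rule_format, of "Suc k"] True by simp
    qed
    have suf: "\<forall>k. Ls w (filter P (drop k s)) - rho * Ls c (filter P (drop k s)) \<ge> 0"
    proof
      fix k show "Ls w (filter P (drop k s)) - rho * Ls c (filter P (drop k s)) \<ge> 0"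
        using Cons.prems(2)[rule_format, of "Suc k"] by simp
    qed
    have "Efn w c P s + K * Ls c (filter P s) \<ge> 0" using Cons.IH[OF pre suf] Cons.prems(3) by simp
    moreover have "K * c x \<ge> 0" using K0 Cons.prems(3) by simp
    ultimately show ?thesis using True by (simp add: algebra_simps)
  next
    case False
    define K' where "K' = K + rho * c x - w x"
    have pre: "\<forall>k. K' + rho * Ls c (filter (\<lambda>x. \<not> P x) (take k s)) - Ls w (filter (\<lambda>x. \<not> P x) (take k s)) \<ge> 0"
    proof
      fix k show "K' + rho * Ls c (filter (\<lambda>x. \<not> P x) (take k s)) - Ls w (filter (\<lambda>x. \<not> P x) (take k s)) \<ge> 0"
        using Cons.prems(1)[rule_format, of "Suc k"] False by (simp add: K'_def algebra_simps)
    qed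
    have suf: "\<forall>k. Ls w (filter P (drop k s)) - rho * Ls c (filter P (drop k s)) \<ge> 0"
    proof
      fix k show "Ls w (filter P (drop k s)) - rho * Ls c (filter P (drop k s)) \<ge> 0"
        using Cons.prems(2)[rule_format, of "Suc k"] by simp
    qed
    have IH: "Efn w c P s + K' * Ls c (filter P s) \<ge> 0" using Cons.IH[OF pre suf] Cons.prems(3) by simp
    have Y: "Ls w (filter P s) - rho * Ls c (filter P s) \<ge> 0" using Cons.prems(2)[rule_format, of 1] by simp
    have cx: "c x \<ge> 0" using Cons.prems(3) by simp
    have "c x * (Ls w (filter P s) - rho * Ls c (filter P s)) \<ge> 0" using Y cx by simp
    then show ?thesis using IH False by (simp add: K'_def algebra_simps)
  qed
qed



definition SD :: "(nat \<times> nat) set \<Rightarrow> (nat \<Rightarrow> real) \<Rightarrow> (nat \<Rightarrow> real) \<Rightarrow> nat set list \<Rightarrow> bool" where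
  "SD E w c As \<longleftrightarrow> (\<forall>i<length As.
      initial_set_in E (\<Union>(set (drop i As))) (As ! i) \<and>
      (\<forall>A'. initial_set_in E (\<Union>(set (drop i As))) A' \<longrightarrow> density w c A' \<le> density w c (As ! i)) \<and>
      As ! i \<inter> \<Union>(set (drop (Suc i) As)) = {})"

lemma SD_Cons:
  assumes "SD E w c (A # rest)"
  shows "SD E w c rest" "initial_set_in E (A \<union> \<Union>(set rest)) A"
    "\<forall>A'. initial_set_in E (A \<union> \<Union>(set rest)) A' \<longrightarrow> density w c A' \<le> density w c A"
    "A \<inter> \<Union>(set rest) = {}"
proof -
  show "SD E w c rest" unfolding SD_def
  proof (intro allI impI)
    fix i assume "i < length rest"
    then show "initial_set_in E (\<Union> (set (drop i rest))) (rest ! i) \<and>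
         (\<forall>A'. initial_set_in E (\<Union> (set (drop i rest))) A' \<longrightarrow> density w c A' \<le> density w c (rest ! i)) \<and>
         rest ! i \<inter> \<Union> (set (drop (Suc i) rest)) = {}"
      using assms[unfolded SD_def, rule_format, of "Suc i"] by simp
  qed
  show "initial_set_in E (A \<union> \<Union>(set rest)) A"
    "\<forall>A'. initial_set_in E (A \<union> \<Union>(set rest)) A' \<longrightarrow> density w c A' \<le> density w c A"
    "A \<inter> \<Union>(set rest) = {}"
    using assms[unfolded SD_def, rule_format, of 0] by auto
qed

lemma dens_le:
  assumes "finite Y" "\<forall>v\<in>Y. c v > 0" "density w c Y \<le> rho"
  shows "sum w Y \<le> rho * sum c Y"
proof (cases "Y = {}")
  case True then show ?thesis by simp
next
  case False
  then have "sum c Y > 0" using assms by (simp add: sum_pos)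
  then show ?thesis using assms False by (simp add: density_def divide_le_eq mult.commute)
qed

lemma dens_eq:
  assumes "finite A" "\<forall>v\<in>A. c v > 0"
  shows "sum w A = density w c A * sum c A"
proof (cases "A = {}")
  case True then show ?thesis by simp
next
  case False
  then have "sum c A > 0" using assms by (simp add: sum_pos)
  then show ?thesis using False by (simp add: density_def)
qed

lemma compl_dens:
  fixes w c :: "nat \<Rightarrow> real"
  assumes "finite A" "Z \<subseteq> A" "sum w Z \<le> rho * sum c Z" "sum w A = rho * sum c A"
  shows "sum w (A - Z) \<ge> rho * sum c (A - Z)"
proof -
  have "finite Z" using assms finite_subset by blast
  have "sum w (A - Z) = sum w A - sum w Z" "sum c (A - Z) = sum c A - sum c Z"
    using assms \<open>finite Z\<close> by (auto simp: sum_diff)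
  moreover have "rho * sum c (A - Z) = rho * sum c A - rho * sum c Z"
    using calculation(2) by (simp add: right_diff_distrib)
  ultimately show ?thesis using assms by linarith
qed



lemma claimM:
  fixes As :: "nat set list" and w c :: "nat \<Rightarrow> real"
  assumes "SD E w c As" "\<forall>v\<in>\<Union>(set As). w v \<ge> 0 \<and> c v > 0" "lam \<ge> 0"
    "is_search_in E (\<Union>(set As)) s"
  shows "\<exists>i \<le> length As. \<exists>s'. is_search_in E (\<Union>(set As)) s' \<and> set s' = \<Union>(set (take i As))
           \<and> Gf w c lam al s' \<le> Gf w c lam al s"
  using assms
proof (induction As arbitrary: s al)
  case Nil
  then have "s = []" by (simp add: is_search_in_def)
  then show ?case by (intro exI[of _ 0] exI[of _ "[]"]) (auto simp: search_nil)
next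
  case (Cons A rest)
  define V where "V = A \<union> \<Union>(set rest)"
  define V' where "V' = \<Union>(set rest)"
  have VV: "\<Union>(set (A # rest)) = V" by (simp add: V_def)
  have sV: "is_search_in E V s" using Cons.prems VV by simp
  have pos: "\<forall>v\<in>V. w v \<ge> 0 \<and> c v > 0" using Cons.prems VV by simp
  note sdc = SD_Cons[OF Cons.prems(1)]
  have disj: "A \<inter> V' = {}" using sdc V'_def by simp
  have VA: "V - A = V'" using disj by (auto simp: V_def V'_def)
  define rho where "rho = density w c A"
  obtain a where a: "is_search_in E V a" "set a = A"
    using sdc(2) by (auto simp: initial_set_in_def V_def)
  have AV: "A \<subseteq> V" by (simp add: V_def)
  have maxd: "\<And>q. is_search_in E V q \<Longrightarrow> sum w (set q) \<le> rho * sum c (set q)"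
  proof -
    fix q assume q: "is_search_in E V q"
    have "density w c (set q) \<le> rho"
      using sdc(3) q unfolding rho_def initial_set_in_def V_def by blast
    moreover have "\<forall>v\<in>set q. c v > 0" using q pos by (auto simp: is_search_in_def)
    ultimately show "sum w (set q) \<le> rho * sum c (set q)" by (intro dens_le) auto
  qed
  have hA: "sum w A = rho * sum c A"
    unfolding rho_def using pos AV a(2) by (intro dens_eq) auto
  have dcA: "\<forall>v\<in>A. \<forall>u\<in>V. (u,v)\<in>E \<longrightarrow> u\<in>A"
    using search_downclosed[OF a(1)] a(2) by blast
  have filtA: "\<And>q. is_search_in E V q \<Longrightarrow> is_search_in E V (filter (\<lambda>x. x \<in> A) q)"
  proof -
    fix q assume "is_search_in E V q"
    then have "is_search_in E {x\<in>V. x \<in> A} (filter (\<lambda>x. x \<in> A) q)" by (rule search_filter)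
    moreover have "{x\<in>V. x \<in> A} = A" using AV by auto
    ultimately show "is_search_in E V (filter (\<lambda>x. x \<in> A) q)" using search_lift AV dcA by metis
  qed
  have complA: "\<And>q. is_search_in E V q \<Longrightarrow> sum w (A - set q) \<ge> rho * sum c (A - set q)"
  proof -
    fix q assume q: "is_search_in E V q"
    have "sum w (set (filter (\<lambda>x. x \<in> A) q)) \<le> rho * sum c (set (filter (\<lambda>x. x \<in> A) q))"
      using maxd[OF filtA[OF q]] .
    moreover have "set (filter (\<lambda>x. x \<in> A) q) = A \<inter> set q" by auto
    moreover have "A - set q = A - (A \<inter> set q)" by auto
    ultimately show "sum w (A - set q) \<ge> rho * sum c (A - set q)"
      using compl_dens[of A "A \<inter> set q" w rho c] hA a(2) by auto
  qed
  show ?case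
  proof (cases "Gf w c lam al s \<ge> 0")
    case True
    then show ?thesis by (intro exI[of _ 0] exI[of _ "[]"]) (auto simp: search_nil)
  next
    case False
    then have Gneg: "Gf w c lam al s < 0" by simp
    have ds: "distinct s" "set s \<subseteq> V" using sV by (auto simp: is_search_in_def)
    have posS: "\<forall>v\<in>set s. w v \<ge> 0 \<and> c v \<ge> 0" using ds pos by fastforce
    
    have step1: "al - Ls w s \<le> lam * rho"
    proof (rule ccontr)
      assume H: "\<not> al - Ls w s \<le> lam * rho"
      have "s \<noteq> []" using Gneg by auto
      then have Cpos: "Ls c s > 0" using ds pos Ls_set[OF ds(1)]
        by (metis empty_iff finite_set set_empty2 subsetD sum_pos)
      have Wle: "Ls w s \<le> rho * Ls c s" using maxd[OF sV] Ls_set[OF ds(1)] by simp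
      have h1: "(al - Ls w s) * Ls c s > lam * rho * Ls c s" using H Cpos by simp
      have h2: "lam * Ls w s \<le> lam * (rho * Ls c s)" using Wle Cons.prems(3) by (rule mult_left_mono)
      have h3: "inner w c s \<le> Ls w s * Ls c s" using inner_le[OF posS] .
      have "Gf w c lam al s \<ge> (al - Ls w s) * Ls c s - lam * Ls w s"
        using h3 by (simp add: Gf_def algebra_simps)
      then show False using h1 h2 Gneg by (simp add: algebra_simps)
    qed
    
    define r where "r = filter (\<lambda>x. x \<notin> set s) a"
    define sp where "sp = s @ r"
    have spS: "is_search_in E V sp" unfolding sp_def r_def by (rule search_complete[OF sV a(1)])
    have dr: "distinct r" using a(1) by (auto simp: r_def is_search_in_def)
    have setr: "set r = A - set s" using a(2) by (auto simp: r_def)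
    have posr: "\<forall>v\<in>set r. w v \<ge> 0 \<and> c v \<ge> 0" using setr pos AV by fastforce
    have Wr: "Ls w r \<ge> rho * Ls c r" using complA[OF sV] setr Ls_set[OF dr] by simp
    have Gr: "Gf w c lam (al - Ls w s) r \<le> 0"
    proof -
      have Cr: "Ls c r \<ge> 0" using posr by (intro Ls_nonneg) auto
      have "(al - Ls w s) * Ls c r \<le> lam * rho * Ls c r" using step1 Cr by (rule mult_right_mono)
      moreover have "lam * (rho * Ls c r) \<le> lam * Ls w r" using Wr Cons.prems(3) by (rule mult_left_mono)
      moreover have "inner w c r \<ge> 0" using inner_nonneg[OF posr] .
      ultimately show ?thesis by (simp add: Gf_def algebra_simps)
    qed
    have Gsp: "Gf w c lam al sp \<le> Gf w c lam al s"
      using Gr by (simp add: sp_def Gf_append)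
    
    define P where "P = (\<lambda>x::nat. x \<in> A)"
    have dsp: "distinct sp" "set sp \<subseteq> V" using spS by (auto simp: is_search_in_def)
    have Asp: "A \<subseteq> set sp" using setr by (auto simp: sp_def)
    have pre: "\<forall>k. 0 + rho * Ls c (filter (\<lambda>x. \<not> P x) (take k sp)) - Ls w (filter (\<lambda>x. \<not> P x) (take k sp)) \<ge> 0"
    proof
      fix k
      define p where "p = take k sp"
      have pS: "is_search_in E V p" using spS search_prefix[of E V p "drop k sp"] by (simp add: p_def)
      have qS: "is_search_in E V (p @ filter (\<lambda>x. x \<notin> set p) a)" by (rule search_complete[OF pS a(1)])
      have "set (p @ filter (\<lambda>x. x \<notin> set p) a) = (set p - A) \<union> A" using a(2) by auto
      then have h: "sum w ((set p - A) \<union> A) \<le> rho * sum c ((set p - A) \<union> A)" using maxd[OF qS] by simp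
      have "sum w ((set p - A) \<union> A) = sum w (set p - A) + sum w A"
        "sum c ((set p - A) \<union> A) = sum c (set p - A) + sum c A"
        using a(2) by (metis Diff_disjoint List.finite_set finite_Diff inf_commute sum.union_disjoint)+
      then have h2: "sum w (set p - A) \<le> rho * sum c (set p - A)" using h hA by (simp add: algebra_simps)
      have dp: "distinct (filter (\<lambda>x. \<not> P x) p)" using dsp by (simp add: p_def)
      have "set (filter (\<lambda>x. \<not> P x) p) = set p - A" by (auto simp: P_def)
      then show "0 + rho * Ls c (filter (\<lambda>x. \<not> P x) (take k sp)) - Ls w (filter (\<lambda>x. \<not> P x) (take k sp)) \<ge> 0"
        using h2 Ls_set[OF dp] by (simp add: p_def)
    qed
    have suf: "\<forall>k. Ls w (filter P (drop k sp)) - rho * Ls c (filter P (drop k sp)) \<ge> 0"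
    proof
      fix k
      define p where "p = take k sp"
      have pS: "is_search_in E V p" using spS search_prefix[of E V p "drop k sp"] by (simp add: p_def)
      have h: "sum w (A - set p) \<ge> rho * sum c (A - set p)" using complA[OF pS] .
      have "set (take k sp) \<inter> set (drop k sp) = {}" using dsp by (simp add: set_take_disj_set_drop_if_distinct)
      moreover have "set sp = set (take k sp) \<union> set (drop k sp)" by (metis append_take_drop_id set_append)
      ultimately have "set (filter P (drop k sp)) = A - set p" using Asp by (auto simp: P_def p_def)
      moreover have "distinct (filter P (drop k sp))" using dsp by simp
      ultimately show "Ls w (filter P (drop k sp)) - rho * Ls c (filter P (drop k sp)) \<ge> 0"
        using h Ls_set by simp
    qed
    have possp: "\<forall>v\<in>set sp. c v \<ge> 0" using dsp pos by fastforce
    have Ege: "Efn w c P sp \<ge> 0" using Efn_nonneg[OF pre suf possp] by simp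
    define a' where "a' = filter P sp"
    define t where "t = filter (\<lambda>x. \<not> P x) sp"
    have Gs1: "Gf w c lam al (a' @ t) \<le> Gf w c lam al sp"
    proof -
      have "Ls w (a' @ t) = Ls w sp" "Ls c (a' @ t) = Ls c sp"
        using Ls_partition unfolding a'_def t_def by auto
      moreover have "inner w c (a' @ t) = inner w c sp + Efn w c P sp"
        unfolding a'_def t_def by (rule inner_partition)
      ultimately show ?thesis using Ege by (simp add: Gf_def)
    qed
    
    have a'S: "is_search_in E V a'" unfolding a'_def P_def by (rule filtA[OF spS])
    have seta': "set a' = A" using Asp by (auto simp: a'_def P_def)
    have tS0: "is_search_in E {x\<in>V. \<not> P x} t" unfolding t_def by (rule search_filter[OF spS])
    have "{x\<in>V. \<not> P x} = V'" using VA by (auto simp: P_def)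
    then have tS: "is_search_in E (\<Union>(set rest)) t" using tS0 by (simp add: V'_def)
    have posrest: "\<forall>v\<in>\<Union>(set rest). w v \<ge> 0 \<and> c v > 0" using pos by (auto simp: V_def)
    obtain j t' where j: "j \<le> length rest" and t': "is_search_in E (\<Union>(set rest)) t'"
      "set t' = \<Union>(set (take j rest))" "Gf w c lam (al - Ls w a') t' \<le> Gf w c lam (al - Ls w a') t"
      using Cons.IH[OF sdc(1) posrest Cons.prems(3) tS] by blast
    have s'S: "is_search_in E V (a' @ t')"
      using search_append[OF a'S] t' seta' VA by (simp add: V'_def)
    have "Gf w c lam al (a' @ t') \<le> Gf w c lam al (a' @ t)" using t' by (simp add: Gf_append)
    then have "Gf w c lam al (a' @ t') \<le> Gf w c lam al s" using Gs1 Gsp by linarith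
    moreover have "set (a' @ t') = \<Union>(set (take (Suc j) (A # rest)))" using seta' t' by simp
    moreover have "Suc j \<le> length (A # rest)" using j by simp
    moreover have "is_search_in E (\<Union>(set (A # rest))) (a' @ t')" using s'S VV by simp
    ultimately show ?thesis by blast
  qed
qed



lemma Ls_idx: "Ls f s = (\<Sum>i<length s. f (s ! i))"
  by (induction s) (simp_all add: sum.lessThan_Suc_shift del: sum.lessThan_Suc)

lemma inner_idx: "inner w c s = (\<Sum>i<length s. c (s ! i) * (\<Sum>j<i. w (s ! j)))"
proof (induction s)
  case Nil then show ?case by simp
next
  case (Cons x xs)
  have "(\<Sum>i<length (x # xs). c ((x # xs) ! i) * (\<Sum>j<i. w ((x # xs) ! j)))
      = (\<Sum>k<length xs. c (xs ! k) * (w x + (\<Sum>j<k. w (xs ! j))))"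
    by (simp add: sum.lessThan_Suc_shift del: sum.lessThan_Suc)
  also have "\<dots> = w x * (\<Sum>k<length xs. c (xs ! k)) + (\<Sum>k<length xs. c (xs ! k) * (\<Sum>j<k. w (xs ! j)))"
    by (simp add: algebra_simps sum.distrib sum_distrib_left)
  finally show ?case using Cons by (simp add: Ls_idx)
qed

lemma Jcost_alt: "Jcost w c s = (if Ls w s > 0 then ereal ((Ls c s - inner w c s) / Ls w s) else \<infinity>)"
proof -
  have "(\<Sum>i<length s. c (s ! i) * (1 - (\<Sum>j<i. w (s ! j)))) = Ls c s - inner w c s"
    by (simp add: inner_idx Ls_idx algebra_simps sum_subtractf)
  then show ?thesis by (simp add: Jcost_def Ls_idx Let_def)
qed

lemma Jplus_alt: "Jplus w c s = (if Ls w s > 0 then ereal (max 0 ((Ls c s - inner w c s) / Ls w s)) else \<infinity>)"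
  by (simp add: Jplus_def Jcost_alt zero_ereal_def max_def)



theorem mainTheorem3:
  fixes n :: nat and E :: "(nat \<times> nat) set" and w c :: "nat \<Rightarrow> real"
    and As :: "nat set list"
  assumes "n \<ge> 1"
    and "is_dag n E"
    and "\<forall>v \<in> {1..n}. w v \<ge> 0"
    and "\<forall>v \<in> {1..n}. c v > 0"
    and "sidney_decomposition n E w c As"
  shows "\<exists>i \<in> {1..length As}. \<exists>s. is_search n E s \<and> set s = \<Union> (set (take i As)) \<and>
           (\<forall>t. is_search n E t \<longrightarrow> Jplus w c s \<le> Jplus w c t)"
proof -
  note sd = assms(5)[unfolded sidney_decomposition_def]
  have U: "\<Union>(set As) = {1..n}" using sd by blast
  have SDAs: "SD E w c As" unfolding SD_def
  proof (intro allI impI)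
    fix i assume i: "i < length As"
    have "initial_set_in E (\<Union> (set (drop i As))) (As ! i)"
      "\<forall>A'. initial_set_in E (\<Union> (set (drop i As))) A' \<longrightarrow> density w c A' \<le> density w c (As ! i)"
      using sd i by (auto simp: Let_def)
    moreover have "As ! i \<inter> \<Union> (set (drop (Suc i) As)) = {}"
    proof (rule ccontr)
      assume "As ! i \<inter> \<Union> (set (drop (Suc i) As)) \<noteq> {}"
      then obtain X where "X \<in> set (drop (Suc i) As)" "As ! i \<inter> X \<noteq> {}" by blast
      then obtain k where k: "k < length (drop (Suc i) As)" "X = drop (Suc i) As ! k"
        by (metis in_set_conv_nth)
      then have "X = As ! (Suc i + k)" "Suc i + k < length As" by auto
      moreover have "As ! i \<inter> As ! (Suc i + k) = {}"
      proof -
        have dj: "\<forall>i j. i < j \<and> j < length As \<longrightarrow> As ! i \<inter> As ! j = {}" using sd by blast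
        have "i < Suc i + k" by simp
        then show ?thesis using dj calculation(2) by blast
      qed
      ultimately show False using \<open>As ! i \<inter> X \<noteq> {}\<close> by simp
    qed
    ultimately show "initial_set_in E (\<Union> (set (drop i As))) (As ! i) \<and>
         (\<forall>A'. initial_set_in E (\<Union> (set (drop i As))) A' \<longrightarrow> density w c A' \<le> density w c (As ! i)) \<and>
         As ! i \<inter> \<Union> (set (drop (Suc i) As)) = {}" by blast
  qed
  have pos: "\<forall>v\<in>\<Union>(set As). w v \<ge> 0 \<and> c v > 0" using U assms(3,4) by simp
  have lenpos: "length As \<ge> 1"
  proof (rule ccontr)
    assume "\<not> length As \<ge> 1"
    then have "As = []" by (cases As) auto
    then show False using U assms(1) by auto
  qed
  define Srch where "Srch = {t. is_search n E t}"
  have finS: "finite Srch"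
  proof (rule finite_subset)
    show "Srch \<subseteq> {xs. set xs \<subseteq> {1..n} \<and> length xs \<le> n}"
    proof
      fix t assume "t \<in> Srch"
      then have "distinct t" "set t \<subseteq> {1..n}" by (auto simp: Srch_def is_search_def is_search_in_def)
      moreover then have "card (set t) \<le> card {1..n}" by (intro card_mono) auto
      ultimately show "t \<in> {xs. set xs \<subseteq> {1..n} \<and> length xs \<le> n}" by (simp add: distinct_card)
    qed
  qed (simp add: finite_lists_length_le)
  have posT: "\<And>t. is_search n E t \<Longrightarrow> \<forall>v\<in>set t. w v \<ge> 0 \<and> c v > 0"
    using assms(3,4) by (auto simp: is_search_def is_search_in_def)
  show ?thesis
  proof (cases "\<exists>t\<in>Srch. Ls w t > 0")
    case False
    have "initial_set_in E (\<Union>(set (drop 0 As))) (As ! 0)"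
    proof -
      have "As \<noteq> []" using lenpos by (cases As) auto
      then show ?thesis using SDAs[unfolded SD_def, rule_format, of 0] by simp
    qed
    then obtain a where a: "is_search_in E {1..n} a" "set a = As ! 0"
      using U unfolding initial_set_in_def by auto
    have "\<forall>t. is_search n E t \<longrightarrow> Jplus w c a \<le> Jplus w c t"
    proof (intro allI impI)
      fix t assume "is_search n E t"
      then have "\<not> Ls w t > 0" using False by (auto simp: Srch_def)
      then show "Jplus w c a \<le> Jplus w c t" by (simp add: Jplus_alt del: ereal_max)
    qed
    moreover have "set a = \<Union>(set (take 1 As))" using a lenpos by (cases As) auto
    ultimately show ?thesis using a lenpos by (intro bexI[of _ 1]) (auto simp: is_search_def)
  next
    case True
    then obtain t0 where t0: "t0 \<in> Srch" "Ls w t0 > 0" by blast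
    define T where "T = Jplus w c ` Srch"
    have finT: "finite T" "T \<noteq> {}" using finS t0 by (auto simp: T_def)
    define me where "me = Min T"
    have meT: "me \<in> T" using finT by (simp add: me_def)
    then obtain ss where ss: "ss \<in> Srch" "Jplus w c ss = me" by (auto simp: T_def)
    have meLe: "\<And>t. t \<in> Srch \<Longrightarrow> me \<le> Jplus w c t" using finT by (auto simp: me_def T_def)
    have "me \<le> Jplus w c t0" using meLe t0 by simp
    also have "Jplus w c t0 < \<infinity>" using t0 by (simp add: Jplus_alt del: ereal_max)
    finally have meinf: "me < \<infinity>" .
    have me0: "me \<ge> 0" using ss by (auto simp: Jplus_def)
    obtain mu where mu: "me = ereal mu" using meinf me0 by (cases me) auto
    have mu0: "mu \<ge> 0" using me0 mu by simp
    define T' where "T' = real_of_ereal ` {x\<in>T. ereal mu < x \<and> x \<noteq> \<infinity>}"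
    have finT': "finite T'" using finT by (simp add: T'_def)
    have T'gt: "\<And>y. y \<in> T' \<Longrightarrow> y > mu"
    proof -
      fix y assume "y \<in> T'"
      then obtain x where "x \<in> T" "ereal mu < x" "x \<noteq> \<infinity>" "y = real_of_ereal x" by (auto simp: T'_def)
      then show "y > mu" using me0 mu by (cases x) auto
    qed
    define lam where "lam = (if T' = {} then mu + 1 else (mu + Min T') / 2)"
    have lamgt: "lam > mu"
    proof (cases "T' = {}")
      case True then show ?thesis by (simp add: lam_def)
    next
      case False
      then have "Min T' > mu" using finT' T'gt by simp
      then show ?thesis using False by (simp add: lam_def)
    qed
    have gap: "\<And>t. t \<in> Srch \<Longrightarrow> Jplus w c t < ereal lam \<Longrightarrow> Jplus w c t \<le> ereal mu"
    proof (rule ccontr)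
      fix t assume t: "t \<in> Srch" "Jplus w c t < ereal lam" "\<not> Jplus w c t \<le> ereal mu"
      then have x: "Jplus w c t \<in> T" "ereal mu < Jplus w c t" "Jplus w c t \<noteq> \<infinity>"
        by (auto simp: T_def)
      then have inT': "real_of_ereal (Jplus w c t) \<in> T'" unfolding T'_def by blast
      then have ne: "T' \<noteq> {}" by auto
      have "Min T' \<le> real_of_ereal (Jplus w c t)" using finT' inT' by simp
      moreover have "real_of_ereal (Jplus w c t) < lam" using t(2) x(2,3) by (cases "Jplus w c t") auto
      moreover have "lam < Min T'"
      proof -
        have "Min T' \<in> T'" using ne finT' by simp
        then have "Min T' > mu" using T'gt by blast
        then show ?thesis using ne by (simp add: lam_def)
      qed
      ultimately show False by simp
    qed
    
    have ssS: "is_search n E ss" using ss by (simp add: Srch_def)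
    have Jss: "Jplus w c ss = ereal mu" using ss mu by simp
    have Wss: "Ls w ss > 0"
    proof (rule ccontr)
      assume "\<not> Ls w ss > 0"
      then have "Jplus w c ss = \<infinity>" by (simp add: Jplus_alt del: ereal_max)
      then show False using Jss by simp
    qed
    have "ereal ((Ls c ss - inner w c ss) / Ls w ss) \<le> ereal mu"
      using Jss Wss by (simp add: Jplus_alt del: ereal_max)
    then have "(Ls c ss - inner w c ss) / Ls w ss < lam" using lamgt by simp
    then have "Ls c ss - inner w c ss < lam * Ls w ss" using Wss by (simp add: divide_less_eq)
    then have Gss: "Gf w c lam 1 ss < 0" by (simp add: Gf_def)
    have lam0: "lam \<ge> 0" using mu0 lamgt by simp
    have "is_search_in E (\<Union>(set As)) ss" using ssS U by (simp add: is_search_def)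
    from claimM[OF SDAs pos lam0 this, of 1]
    obtain i s' where i: "i \<le> length As" and s': "is_search_in E (\<Union>(set As)) s'"
      "set s' = \<Union>(set (take i As))" "Gf w c lam 1 s' \<le> Gf w c lam 1 ss" by blast
    have s'S: "is_search n E s'" using s' U by (simp add: is_search_def)
    have Gs': "Gf w c lam 1 s' < 0" using s' Gss by linarith
    have posS': "\<forall>v\<in>set s'. w v \<ge> 0 \<and> c v \<ge> 0" using posT[OF s'S] by fastforce
    have Ws': "Ls w s' > 0"
    proof (rule ccontr)
      assume "\<not> Ls w s' > 0"
      moreover have "Ls w s' \<ge> 0" using posS' by (intro Ls_nonneg) auto
      ultimately have W0: "Ls w s' = 0" by simp
      have "inner w c s' \<le> Ls w s' * Ls c s'" using inner_le[OF posS'] .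
      moreover have "Ls c s' \<ge> 0" using posS' by (intro Ls_nonneg) auto
      ultimately have "Gf w c lam 1 s' \<ge> 0" using W0 by (simp add: Gf_def)
      then show False using Gs' by simp
    qed
    have i1: "i \<ge> 1"
    proof (rule ccontr)
      assume "\<not> i \<ge> 1"
      then have "i = 0" by simp
      then have "s' = []" using s'(2) by simp
      then show False using Ws' by simp
    qed
    have "Ls c s' - inner w c s' < lam * Ls w s'" using Gs' by (simp add: Gf_def)
    then have q: "(Ls c s' - inner w c s') / Ls w s' < lam" using Ws' by (simp add: divide_less_eq)
    have "Jplus w c s' < ereal lam" using Ws' q lamgt mu0
      by (simp add: Jplus_alt del: ereal_max)
    then have "Jplus w c s' \<le> ereal mu" using gap s'S by (simp add: Srch_def)
    then have "\<forall>t. is_search n E t \<longrightarrow> Jplus w c s' \<le> Jplus w c t"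
    proof (intro allI impI)
      fix t assume "is_search n E t"
      then have "me \<le> Jplus w c t" using meLe by (simp add: Srch_def)
      then show "Jplus w c s' \<le> Jplus w c t" using \<open>Jplus w c s' \<le> ereal mu\<close> mu by simp
    qed
    moreover have "i \<in> {1..length As}" using i i1 by simp
    ultimately show ?thesis using s'S s'(2) by blast
  qed
qed


end
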